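(* Let $q\in\mathbb{C}^\times$ be not a root of unity. The map $\mathbf{u}^{\langle0\rangle}:\mathbb{C}[x]^{\langle0\rangle}\to\mathbb{C}^\times\times\prod_{t>0}\mathbb{C}$ is injective.
   Context: $[k]=(q^k-q^{-k})/(q-q^{-1})$. $p_t(q)(x_1,\dots,x_k)=\sum_{\lambda\vdash t,\ell(\lambda)\le k}q^{-\ell(\lambda)}(q-q^{-1})^{\ell(\lambda)-1}m_\lambda(x_1,\dots,x_k)$ ($m_\lambda$ the monomial symmetric polynomial, $\ell(\lambda)$ the number of nonzero parts). $\mathbb{C}[x]^{\langle0\rangle}$ is the set of polynomials $\varphi=\beta_\varphi(x-\gamma_1)\cdots(x-\gamma_k)\in\mathbb{C}[x]$ whose leading coefficient $\beta_\varphi$ equals $\pm1$, and $\mathbf{u}^{\langle0\rangle}(\varphi)=(\beta_\varphi,(0)_{t>0})$ if $k=0$, $(\beta_\varphi q^k,(p_t(q)(\gamma_1,\dots,\gamma_k))_{t>0})$ if $k>0$. *)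

theory Defs
  imports Complex_Main "HOL-Computational_Algebra.Polynomial" "HOL-Library.Multiset"
begin

definition partitions_of :: "nat \<Rightarrow> nat multiset set" where
  "partitions_of t = {la. (\<forall>a\<in>#la. 0 < a) \<and> sum_mset la = t}"

definition monomial_sym :: "nat multiset \<Rightarrow> complex list \<Rightarrow> complex" where
  "monomial_sym la xs =
     (\<Sum>\<alpha>\<in>{\<alpha>::nat list. length \<alpha> = length xs \<and> mset (filter (\<lambda>a. a \<noteq> 0) \<alpha>) = la}.
        \<Prod>i<length xs. (xs ! i) ^ (\<alpha> ! i))"

definition p_q :: "complex \<Rightarrow> nat \<Rightarrow> complex list \<Rightarrow> complex" where
  "p_q q t xs =
     (\<Sum>la\<in>{la\<in>partitions_of t. size la \<le> length xs}.
        q powi (- int (size la)) * (q - inverse q) ^ (size la - 1) * monomial_sym la xs)"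

definition root_list :: "complex poly \<Rightarrow> complex list" where
  "root_list \<phi> = (SOME gs. \<phi> = smult (lead_coeff \<phi>) (\<Prod>g\<leftarrow>gs. [:-g, 1:]))"

definition Cx0 :: "complex poly set" where
  "Cx0 = {\<phi>. lead_coeff \<phi> = 1 \<or> lead_coeff \<phi> = -1}"

text \<open>u^<0>; the component t = 0 (not part of the product over t>0) is set to 0.\<close>
definition u0 :: "complex \<Rightarrow> complex poly \<Rightarrow> complex \<times> (nat \<Rightarrow> complex)" where
  "u0 q \<phi> = (let \<beta> = lead_coeff \<phi>; gs = root_list \<phi>; k = length gs in
     if k = 0 then (\<beta>, \<lambda>t. 0)
     else (\<beta> * q ^ k, \<lambda>t. if t = 0 then 0 else p_q q t gs))"

definition root_of_unity :: "complex \<Rightarrow> bool" where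
  "root_of_unity q \<longleftrightarrow> (\<exists>n>0. q ^ n = 1)"

end

theory Submission
  imports Defs "HOL-Computational_Algebra.Fundamental_Theorem_Algebra" "HOL-Computational_Algebra.Polynomial_FPS"
    "HOL-Computational_Algebra.Polynomial_Factorial" "HOL-Computational_Algebra.Field_as_Ring"
begin
unbundle fps_syntax


lemma pc_fixed:
  fixes p :: "complex poly"
  assumes "pcompose p [:0,c:] = p" "\<forall>k>0. c ^ k \<noteq> 1"
  shows "p = [:coeff p 0:]"
proof (rule poly_eqI)
  fix n
  have "c ^ n * coeff p n = coeff p n" using assms(1) coeff_pcompose_linear[of p c n] by simp
  then show "coeff p n = coeff [:coeff p 0:] n"
    using assms(2) by (cases n) (auto simp: coeff_pCons)
qed

lemma pc_nonzero:
  fixes p :: "complex poly"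
  assumes "p \<noteq> 0" "c \<noteq> 0"
  shows "pcompose p [:0,c:] \<noteq> 0"
  using pcompose_eq_0[of p "[:0,c:]"] assms by auto

lemma pc_dvd_self:
  fixes A1 B1 :: "complex poly"
  assumes eq: "pcompose A1 [:0,c:] * B1 = pcompose B1 [:0,c:] * A1"
    and cop: "coprime A1 B1" and c: "c \<noteq> 0" "\<forall>k>0. c ^ k \<noteq> 1" and a0: "poly A1 0 \<noteq> 0"
  shows "A1 = [:coeff A1 0:]"
proof -
  have "A1 dvd pcompose A1 [:0,c:] * B1" using eq by simp
  hence "A1 dvd pcompose A1 [:0,c:]" using cop by (simp add: coprime_dvd_mult_left_iff)
  then obtain k where k: "pcompose A1 [:0,c:] = A1 * k" by (auto elim: dvdE)
  have A1nz: "A1 \<noteq> 0" using a0 by auto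
  have "degree (pcompose A1 [:0,c:]) = degree A1" using c by (simp add: degree_pcompose)
  moreover have "k \<noteq> 0" using k pc_nonzero[OF A1nz c(1)] by auto
  ultimately have "degree k = 0" using k A1nz by (simp add: degree_mult_eq)
  then obtain \<kappa> where kk: "k = [:\<kappa>:]" by (metis degree_eq_zeroE)
  have "poly (pcompose A1 [:0,c:]) 0 = poly A1 0" by (simp add: poly_pcompose)
  hence "poly A1 0 * \<kappa> = poly A1 0" using k kk by simp
  hence "\<kappa> = 1" using a0 by simp
  hence "pcompose A1 [:0,c:] = A1" using k kk by simp
  thus ?thesis using pc_fixed c by blast
qed

lemma alg_main:
  fixes A B :: "complex poly"
  assumes eq: "pcompose A [:0,c:] * B = pcompose B [:0,c:] * A"
    and c: "c \<noteq> 0" "\<forall>k>0. c ^ k \<noteq> 1" and a0: "poly A 0 = 1" and b0: "poly B 0 = 1"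
  shows "A = B"
proof -
  have Anz: "A \<noteq> 0" using a0 by auto
  hence gnz: "gcd A B \<noteq> 0" by simp
  obtain A1 B1 where AB: "A = A1 * gcd A B" "B = B1 * gcd A B" and cop: "coprime A1 B1"
    using gcd_coprime_exists[OF gnz] by blast
  define g where "g = gcd A B"
  have gc: "pcompose g [:0,c:] \<noteq> 0" using pc_nonzero[OF gnz c(1)] g_def by simp
  have "(pcompose A1 [:0,c:] * B1) * (pcompose g [:0,c:] * g) = (pcompose B1 [:0,c:] * A1) * (pcompose g [:0,c:] * g)"
    using eq AB unfolding g_def[symmetric] by (simp add: pcompose_mult algebra_simps)
  hence eq1: "pcompose A1 [:0,c:] * B1 = pcompose B1 [:0,c:] * A1" using gc gnz g_def Anz by simp
  have pa: "poly A 0 = poly A1 0 * poly g 0" using AB(1) g_def by (metis poly_mult)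
  have pb: "poly B 0 = poly B1 0 * poly g 0" using AB(2) g_def by (metis poly_mult)
  have A10: "poly A1 0 \<noteq> 0" using a0 pa by auto
  have B10: "poly B1 0 \<noteq> 0" using b0 pb by auto
  have A1: "A1 = [:coeff A1 0:]" by (rule pc_dvd_self[OF eq1 cop c A10])
  have B1: "B1 = [:coeff B1 0:]" by (rule pc_dvd_self[OF eq1[symmetric] _ c B10]) (use cop in \<open>simp add: ac_simps\<close>)
  have "poly A1 0 * poly g 0 = poly B1 0 * poly g 0" using a0 b0 pa pb by simp
  moreover have "poly g 0 \<noteq> 0" using a0 pa by auto
  ultimately have "poly A1 0 = poly B1 0" by simp
  hence "A1 = B1" using A1 B1 by (metis poly_0_coeff_0)
  thus ?thesis using AB by simp
qed



definition fco :: "complex \<Rightarrow> nat \<Rightarrow> complex \<Rightarrow> complex" where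
  "fco d a x = (if a = 0 then 1 else d * x ^ a)"

definition Fx :: "complex \<Rightarrow> complex \<Rightarrow> complex fps" where
  "Fx d x = Abs_fps (\<lambda>a. fco d a x)"

definition Ef :: "complex \<Rightarrow> complex list \<Rightarrow> complex fps" where
  "Ef d xs = prod_list (map (Fx d) xs)"

definition Pp :: "complex list \<Rightarrow> complex poly" where
  "Pp xs = prod_list (map (\<lambda>x. [:1, -x:]) xs)"

definition Sset :: "nat \<Rightarrow> nat \<Rightarrow> nat list set" where
  "Sset n t = {\<alpha>. length \<alpha> = n \<and> sum_list \<alpha> = t}"

lemma lin_fps: "fps_of_poly [:1, -x:] * Fx d x = fps_of_poly [:1, -((1-d)*x):]"
proof -
  have e1: "fps_of_poly [:1, -x:] = 1 - fps_const x * fps_X"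
    by (simp add: fps_of_poly_pCons fps_eq_iff)
  have e2: "fps_of_poly [:1, -((1-d)*x):] = 1 - fps_const ((1-d)*x) * fps_X"
    by (simp add: fps_of_poly_pCons fps_eq_iff)
  have h: "((1 - fps_const c * fps_X) * F) $ n = F $ n - c * (if n = 0 then 0 else F $ (n - 1))" for c :: complex and F :: "complex fps" and n
  proof -
    have "(1 - fps_const c * fps_X) * F = F - fps_const c * (fps_X * F)" by (simp add: algebra_simps)
    then show ?thesis
      by (simp del: fps_X_mult_nth add: fps_X_mult_nth[of F])
  qed
  show ?thesis unfolding e1 e2
  proof (rule fps_ext)
    fix n
    show "((1 - fps_const x * fps_X) * Fx d x) $ n = (1 - fps_const ((1 - d) * x) * fps_X) $ n"
    proof (cases n)
      case 0 then show ?thesis unfolding h by (simp add: Fx_def fco_def)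
    next
      case (Suc m)
      then show ?thesis unfolding h by (cases m) (simp_all add: Fx_def fco_def algebra_simps)
    qed
  qed
qed

lemma lin_comp: "pcompose [:1, -(x::complex):] [:0, c:] = [:1, -(c*x):]"
  by (simp add: pcompose_pCons mult.commute)

lemma one_comp: "pcompose (1::complex poly) [:0, c:] = 1"
  by (simp add: one_pCons pcompose_pCons)

lemma Pp_comp: "pcompose (Pp xs) [:0, c:] = prod_list (map (\<lambda>x. [:1, -(c*x):]) xs)"
proof (induction xs)
  case Nil then show ?case by (simp add: Pp_def one_comp)
next
  case (Cons x xs) then show ?case
    by (simp only: Pp_def list.map prod_list.Cons pcompose_mult lin_comp)
qed

lemma prod_fps: "fps_of_poly (Pp xs) * Ef d xs = fps_of_poly (pcompose (Pp xs) [:0, 1-d:])"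
proof (induction xs)
  case Nil then show ?case using one_comp[of "1-d"] by (simp add: Pp_def Ef_def)
next
  case (Cons x xs)
  have "fps_of_poly (Pp (x#xs)) * Ef d (x#xs) = (fps_of_poly [:1, -x:] * Fx d x) * (fps_of_poly (Pp xs) * Ef d xs)"
    by (simp add: Pp_def Ef_def fps_of_poly_mult algebra_simps)
  also have "\<dots> = fps_of_poly [:1, -((1-d)*x):] * fps_of_poly (pcompose (Pp xs) [:0, 1-d:])"
    using Cons lin_fps by simp
  also have "\<dots> = fps_of_poly (pcompose (Pp (x#xs)) [:0, 1-d:])"
    by (simp add: Pp_comp fps_of_poly_mult)
  finally show ?case .
qed

lemma Ef0: "Ef d xs $ 0 = 1"
  by (induction xs) (simp_all add: Ef_def Fx_def fco_def)

lemma finite_Sset: "finite (Sset n t)"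
proof (rule finite_subset)
  show "Sset n t \<subseteq> {xs. set xs \<subseteq> {..t} \<and> length xs = n}"
    by (auto simp: Sset_def member_le_sum_list)
  show "finite {xs. set xs \<subseteq> {..t} \<and> length xs = n}"
    by (rule finite_lists_length_eq) simp
qed

lemma Sset_Suc: "Sset (Suc n) t = (\<lambda>(a,\<beta>). a#\<beta>) ` (SIGMA a:{0..t}. Sset n (t-a))"
proof safe
  fix \<alpha> assume "\<alpha> \<in> Sset (Suc n) t"
  then obtain a \<beta> where "\<alpha> = a#\<beta>" "length \<beta> = n" "a + sum_list \<beta> = t"
    by (cases \<alpha>) (auto simp: Sset_def)
  then show "\<alpha> \<in> (\<lambda>(a,\<beta>). a#\<beta>) ` (SIGMA a:{0..t}. Sset n (t-a))"
    by (auto simp: Sset_def image_iff)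
qed (auto simp: Sset_def)

lemma Ef_nth: "Ef d xs $ t = (\<Sum>\<alpha>\<in>Sset (length xs) t. \<Prod>i<length xs. fco d (\<alpha>!i) (xs!i))"
proof (induction xs arbitrary: t)
  case Nil
  have "Sset 0 t = (if t = 0 then {[]} else {})" by (auto simp: Sset_def)
  then show ?case by (simp add: Ef_def)
next
  case (Cons x xs)
  let ?n = "length xs"
  have "Ef d (x#xs) $ t = (\<Sum>a=0..t. Fx d x $ a * Ef d xs $ (t - a))"
    by (simp add: Ef_def fps_mult_nth)
  also have "\<dots> = (\<Sum>a=0..t. \<Sum>\<beta>\<in>Sset ?n (t-a). fco d a x * (\<Prod>i<?n. fco d (\<beta>!i) (xs!i)))"
    by (simp add: Cons Fx_def sum_distrib_left)
  also have "\<dots> = (\<Sum>(a,\<beta>)\<in>(SIGMA a:{0..t}. Sset ?n (t-a)). fco d a x * (\<Prod>i<?n. fco d (\<beta>!i) (xs!i)))"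
    by (rule sum.Sigma) (auto simp: finite_Sset)
  also have "\<dots> = (\<Sum>\<alpha>\<in>(\<lambda>(a,\<beta>). a#\<beta>) ` (SIGMA a:{0..t}. Sset ?n (t-a)). \<Prod>i<Suc ?n. fco d (\<alpha>!i) ((x#xs)!i))"
    by (subst sum.reindex) (auto simp del: prod.lessThan_Suc simp add: inj_on_def prod.lessThan_Suc_shift intro!: sum.cong)
  also have "\<dots> = (\<Sum>\<alpha>\<in>Sset (length (x#xs)) t. \<Prod>i<length (x#xs). fco d (\<alpha>!i) ((x#xs)!i))"
    by (simp add: Sset_Suc)
  finally show ?case .
qed

lemma sum_filter_nz: "sum_list (filter (\<lambda>a. a \<noteq> 0) (\<alpha>::nat list)) = sum_list \<alpha>"
  by (induction \<alpha>) auto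

lemma fco_prod:
  assumes "length \<alpha> = length xs"
  shows "(\<Prod>i<length xs. fco d (\<alpha>!i) (xs!i)) =
         d ^ length (filter (\<lambda>a. a \<noteq> 0) \<alpha>) * (\<Prod>i<length xs. (xs!i) ^ (\<alpha>!i))"
proof -
  have "(\<Prod>i<length xs. fco d (\<alpha>!i) (xs!i)) =
        (\<Prod>i<length xs. (if \<alpha>!i \<noteq> 0 then d else 1) * (xs!i) ^ (\<alpha>!i))"
    by (rule prod.cong) (auto simp: fco_def)
  also have "\<dots> = (\<Prod>i<length xs. (if \<alpha>!i \<noteq> 0 then d else 1)) * (\<Prod>i<length xs. (xs!i) ^ (\<alpha>!i))"
    by (rule prod.distrib)
  also have "(\<Prod>i<length xs. (if \<alpha>!i \<noteq> 0 then d else 1)) = (\<Prod>i\<in>{i\<in>{..<length xs}. \<alpha>!i \<noteq> 0}. d)"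
    using prod.inter_filter[of "{..<length xs}" "\<lambda>_. d" "\<lambda>i. \<alpha>!i \<noteq> 0"] by simp
  also have "\<dots> = d ^ card {i\<in>{..<length xs}. \<alpha>!i \<noteq> 0}" by simp
  also have "card {i\<in>{..<length xs}. \<alpha>!i \<noteq> 0} = length (filter (\<lambda>a. a \<noteq> 0) \<alpha>)"
    using assms by (simp add: length_filter_conv_card)
  finally show ?thesis .
qed

lemma pq_expand:
  assumes "t > 0" "q \<noteq> 0"
  shows "(q - inverse q) * p_q q t xs =
    (\<Sum>\<alpha>\<in>Sset (length xs) t. (inverse q * (q - inverse q)) ^ length (filter (\<lambda>a. a \<noteq> 0) \<alpha>)
        * (\<Prod>i<length xs. (xs!i) ^ (\<alpha>!i)))"
proof -
  define n where "n = length xs"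
  define L where "L = {la\<in>partitions_of t. size la \<le> n}"
  define g where "g = (\<lambda>\<alpha>::nat list. mset (filter (\<lambda>a. a \<noteq> 0) \<alpha>))"
  define W where "W = (\<lambda>la::nat multiset. q powi (- int (size la)) * (q - inverse q) ^ (size la - 1))"
  define mo where "mo = (\<lambda>\<alpha>::nat list. \<Prod>i<n. (xs!i) ^ (\<alpha>!i))"
  have sg: "sum_mset (g \<alpha>) = sum_list \<alpha>" for \<alpha>
    by (simp only: g_def sum_mset_sum_list sum_filter_nz)
  have sz: "size (g \<alpha>) = length (filter (\<lambda>a. a \<noteq> 0) \<alpha>)" for \<alpha>
    by (simp only: g_def size_mset)
  have le_sum: "a \<le> sum_mset M" if "a \<in># M" for a :: nat and M
    using sum_mset.remove[OF that] by simp
  have finL: "finite L"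
  proof (rule finite_subset)
    show "L \<subseteq> (\<Union>k\<in>{..n}. multisets_of_size {..t} k)"
      by (auto simp: L_def partitions_of_def multisets_of_size_def le_sum)
    show "finite (\<Union>k\<in>{..n}. multisets_of_size {..t} k)" by auto
  qed
  have gS: "g ` Sset n t \<subseteq> L"
  proof
    fix la assume "la \<in> g ` Sset n t"
    then obtain \<alpha> where a: "\<alpha> \<in> Sset n t" "la = g \<alpha>" by auto
    have "size la \<le> n" using a length_filter_le[of "\<lambda>a. a \<noteq> 0" \<alpha>] by (simp add: sz Sset_def)
    moreover have "sum_mset la = t" using a sg by (simp add: Sset_def)
    moreover have "\<forall>x\<in>#la. 0 < x" using a by (auto simp: g_def)
    ultimately show "la \<in> L" by (simp add: L_def partitions_of_def)
  qed
  have sets: "{\<alpha>\<in>Sset n t. g \<alpha> = la} = {\<alpha>. length \<alpha> = n \<and> mset (filter (\<lambda>a. a \<noteq> 0) \<alpha>) = la}"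
    if "la \<in> L" for la
    using that sg by (auto simp: Sset_def L_def partitions_of_def g_def)
  have "p_q q t xs = (\<Sum>la\<in>L. W la * monomial_sym la xs)"
    by (simp add: p_q_def L_def W_def n_def)
  also have "\<dots> = (\<Sum>la\<in>L. \<Sum>\<alpha>\<in>{\<alpha>\<in>Sset n t. g \<alpha> = la}. W (g \<alpha>) * mo \<alpha>)"
  proof (rule sum.cong[OF refl])
    fix la assume la: "la \<in> L"
    have "W la * monomial_sym la xs = (\<Sum>\<alpha>\<in>{\<alpha>. length \<alpha> = n \<and> mset (filter (\<lambda>a. a \<noteq> 0) \<alpha>) = la}. W la * mo \<alpha>)"
      unfolding monomial_sym_def mo_def n_def by (simp only: sum_distrib_left)
    also have "\<dots> = (\<Sum>\<alpha>\<in>{\<alpha>\<in>Sset n t. g \<alpha> = la}. W la * mo \<alpha>)"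
      by (simp only: sets[OF la])
    also have "\<dots> = (\<Sum>\<alpha>\<in>{\<alpha>\<in>Sset n t. g \<alpha> = la}. W (g \<alpha>) * mo \<alpha>)"
      by (rule sum.cong) auto
    finally show "W la * monomial_sym la xs = (\<Sum>\<alpha>\<in>{\<alpha>\<in>Sset n t. g \<alpha> = la}. W (g \<alpha>) * mo \<alpha>)" .
  qed
  also have "\<dots> = (\<Sum>\<alpha>\<in>Sset n t. W (g \<alpha>) * mo \<alpha>)"
    by (rule sum.group[OF finite_Sset finL gS])
  finally have "(q - inverse q) * p_q q t xs = (\<Sum>\<alpha>\<in>Sset n t. (q - inverse q) * W (g \<alpha>) * mo \<alpha>)"
    by (simp add: sum_distrib_left mult.assoc)
  also have "\<dots> = (\<Sum>\<alpha>\<in>Sset n t. (inverse q * (q - inverse q)) ^ length (filter (\<lambda>a. a \<noteq> 0) \<alpha>) * mo \<alpha>)"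
  proof (rule sum.cong[OF refl])
    fix \<alpha> assume "\<alpha> \<in> Sset n t"
    hence "sum_mset (g \<alpha>) = t" using sg by (simp add: Sset_def)
    hence "g \<alpha> \<noteq> {#}" using assms(1) by auto
    hence "size (g \<alpha>) > 0" by (simp add: nonempty_has_size)
    then obtain k where k: "size (g \<alpha>) = Suc k" by (cases "size (g \<alpha>)") auto
    show "(q - inverse q) * W (g \<alpha>) * mo \<alpha> = (inverse q * (q - inverse q)) ^ length (filter (\<lambda>a. a \<noteq> 0) \<alpha>) * mo \<alpha>"
    proof -
      have pw: "q powi (- int (Suc k)) = inverse q ^ Suc k"
        by (simp only: power_int_minus power_int_of_nat power_inverse)
      show ?thesis unfolding sz[symmetric] W_def k unfolding pw
        by (simp only: power_mult_distrib diff_Suc_1 power_Suc mult_ac)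
    qed
  qed
  finally show ?thesis by (simp only: mo_def n_def)
qed


lemma Ef_pq:
  assumes "t > 0" "q \<noteq> 0"
  shows "Ef (inverse q * (q - inverse q)) xs $ t = (q - inverse q) * p_q q t xs"
  unfolding Ef_nth pq_expand[OF assms]
  by (rule sum.cong[OF refl]) (simp add: fco_prod Sset_def)

lemma Pp0: "poly (Pp xs) 0 = 1"
  by (induction xs) (simp_all add: Pp_def)

lemma refl_eval:
  assumes "z \<noteq> 0"
  shows "poly (prod_list (map (\<lambda>g. [:-g, 1:]) xs)) z = z ^ length xs * poly (Pp xs) (inverse z)"
  using assms by (induction xs) (simp_all add: Pp_def field_simps)

lemma poly_eq_nonzero:
  fixes p r :: "complex poly"
  assumes "\<And>z. z \<noteq> 0 \<Longrightarrow> poly p z = poly r z"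
  shows "p = r"
proof (rule ccontr)
  assume "p \<noteq> r"
  hence "p - r \<noteq> 0" by simp
  hence fin: "finite {z. poly (p - r) z = 0}" by (rule poly_roots_finite)
  have "UNIV - {0} \<subseteq> {z. poly (p - r) z = 0}" using assms by auto
  hence "finite (UNIV - {0::complex})" using fin finite_subset by blast
  thus False by (simp add: infinite_UNIV_char_0)
qed

lemma main_lists:
  fixes q :: complex
  assumes q: "q \<noteq> 0" and nr: "\<not> root_of_unity q" and len: "length xs = length ys"
    and pe: "\<And>t. t > 0 \<Longrightarrow> p_q q t xs = p_q q t ys"
  shows "prod_list (map (\<lambda>g. [:-g, 1:]) xs) = prod_list (map (\<lambda>g. [:-g, 1:]) ys)"
proof -
  define d where "d = inverse q * (q - inverse q)"
  define c where "c = 1 - d"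
  have c_eq: "c = inverse q ^ 2" using q by (simp add: c_def d_def field_simps power2_eq_square)
  have cnz: "c \<noteq> 0" using q c_eq by simp
  have cru: "\<forall>k>0. c ^ k \<noteq> 1"
  proof (intro allI impI notI)
    fix k :: nat assume k: "k > 0" "c ^ k = 1"
    hence "inverse (q ^ (2*k)) = 1" using c_eq by (simp add: power_mult power_inverse)
    hence "q ^ (2*k) = 1" by (simp add: inverse_eq_1_iff)
    hence "\<exists>n>0. q ^ n = 1" using k(1) by (intro exI[of _ "2*k"]) simp
    thus False using nr unfolding root_of_unity_def by blast
  qed
  have E: "Ef d xs = Ef d ys"
  proof (rule fps_ext)
    fix t show "Ef d xs $ t = Ef d ys $ t"
    proof (cases "t = 0")
      case True thus ?thesis by (simp add: Ef0)
    next
      case False thus ?thesis using Ef_pq[of t q] q pe unfolding d_def by simp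
    qed
  qed
  have "fps_of_poly (pcompose (Pp xs) [:0,c:] * Pp ys) = fps_of_poly (Pp xs) * Ef d xs * fps_of_poly (Pp ys)"
    using prod_fps[of xs d] by (simp add: fps_of_poly_mult c_def)
  also have "\<dots> = fps_of_poly (Pp ys) * Ef d ys * fps_of_poly (Pp xs)" using E by (simp add: ac_simps)
  also have "\<dots> = fps_of_poly (pcompose (Pp ys) [:0,c:] * Pp xs)"
    using prod_fps[of ys d] by (simp add: fps_of_poly_mult c_def)
  finally have "pcompose (Pp xs) [:0,c:] * Pp ys = pcompose (Pp ys) [:0,c:] * Pp xs"
    by (simp only: fps_of_poly_eq_iff)
  hence PP: "Pp xs = Pp ys" using alg_main cnz cru Pp0 by blast
  show ?thesis
    by (rule poly_eq_nonzero) (simp add: refl_eval PP len)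
qed

lemma root_list_prop:
  "\<phi> = smult (lead_coeff \<phi>) (\<Prod>g\<leftarrow>root_list \<phi>. [:-g, 1:])"
proof -
  obtain roots where roots: "mset roots = proots \<phi>"
    using ex_mset by blast
  have "\<phi> = smult (lead_coeff \<phi>) (\<Prod>g\<leftarrow>roots. [:-g, 1:])"
    using complex_poly_decompose_multiset[of \<phi>]
    by (simp add: prod_mset_prod_list[symmetric] roots[symmetric])
  thus ?thesis unfolding root_list_def by (rule someI)
qed

theorem mainTheorem15:
  fixes q :: complex
  assumes "q \<noteq> 0" and "\<not> root_of_unity q"
  shows "inj_on (u0 q) Cx0"
proof (rule inj_onI)
  fix \<phi> \<psi> assume ph: "\<phi> \<in> Cx0" and ps: "\<psi> \<in> Cx0" and eq: "u0 q \<phi> = u0 q \<psi>"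
  define k where "k = length (root_list \<phi>)"
  define l where "l = length (root_list \<psi>)"
  define b where "b = lead_coeff \<phi>"
  define b' where "b' = lead_coeff \<psi>"
  have bb: "b = 1 \<or> b = -1" "b' = 1 \<or> b' = -1" using ph ps by (auto simp: Cx0_def b_def b'_def)
  have ru: False if "n > 0" "q ^ n = 1 \<or> q ^ n = -1" for n :: nat
  proof -
    have "q ^ (2*n) = (q ^ n) ^ 2" by (metis power_mult mult.commute)
    hence "q ^ (2*n) = 1" using that(2) by auto
    hence "\<exists>m>0. q ^ m = 1" using that(1) by (intro exI[of _ "2*n"]) simp
    thus False using assms(2) unfolding root_of_unity_def by blast
  qed
  have fst_eq: "b * q ^ k = b' * q ^ l"
  proof -
    have "fst (u0 q \<phi>) = b * q ^ k" "fst (u0 q \<psi>) = b' * q ^ l"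
      by (auto simp: u0_def Let_def k_def l_def b_def b'_def)
    thus ?thesis using eq by simp
  qed
  have kl: "k = l"
  proof (rule ccontr)
    assume "k \<noteq> l"
    then consider "k < l" | "l < k" by linarith
    thus False
    proof cases
      case 1
      hence "q ^ l = q ^ k * q ^ (l - k)" by (simp flip: power_add)
      hence "b = b' * q ^ (l - k)" using fst_eq assms(1) by simp
      hence "q ^ (l - k) = 1 \<or> q ^ (l - k) = -1" using bb by (auto simp add: minus_equation_iff)
      thus False using ru[of "l - k"] 1 by simp
    next
      case 2
      hence "q ^ k = q ^ l * q ^ (k - l)" by (simp flip: power_add)
      hence "b' = b * q ^ (k - l)" using fst_eq assms(1) by simp
      hence "q ^ (k - l) = 1 \<or> q ^ (k - l) = -1" using bb by (auto simp add: minus_equation_iff)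
      thus False using ru[of "k - l"] 2 by simp
    qed
  qed
  hence bb': "b = b'" using fst_eq assms(1) by simp
  have PE: "(\<Prod>g\<leftarrow>root_list \<phi>. [:-g, 1:]) = (\<Prod>g\<leftarrow>root_list \<psi>. [:-g, 1:])"
  proof (cases "k = 0")
    case True
    thus ?thesis using kl by (simp add: k_def l_def)
  next
    case False
    have pt: "p_q q t (root_list \<phi>) = p_q q t (root_list \<psi>)" if "t > 0" for t
    proof -
      have "snd (u0 q \<phi>) t = p_q q t (root_list \<phi>)" "snd (u0 q \<psi>) t = p_q q t (root_list \<psi>)"
        using False kl that by (auto simp: u0_def Let_def k_def l_def)
      thus ?thesis using eq by simp
    qed
    have lenq: "length (root_list \<phi>) = length (root_list \<psi>)" using kl by (simp only: k_def l_def)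
    show ?thesis by (rule main_lists[OF assms lenq pt])
  qed
  have e1: "\<phi> = smult b (\<Prod>g\<leftarrow>root_list \<phi>. [:-g, 1:])"
    unfolding b_def by (rule root_list_prop)
  have e2: "\<psi> = smult b' (\<Prod>g\<leftarrow>root_list \<psi>. [:-g, 1:])"
    unfolding b'_def by (rule root_list_prop)
  show "\<phi> = \<psi>" by (subst e1, subst e2) (simp only: PE bb')
qed

end
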